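(* Let $n\ge1$ and let $\pi$ be uniformly distributed on $\mathcal S_n$. Then there exists a random permutation $\sigma\in\mathcal S_n$, which is a (bijective) deterministic function of $\pi$ and hence uniformly distributed on $\mathcal S_n$, such that with the one-cycle permutation $\sigma^*:=(\pi(1),\pi(2),\dots,\pi(n))_{\rm c}\in\mathcal S_n^*$, \[ \mathbb{E}\,\#\{i\in\{1,\dots,n\}:\sigma(i)\ne\sigma^*(i)\}\le\sum_{j=1}^n j^{-1}\le1+\log(n). \]
   Context: $\mathcal S_n$ denotes the set of permutations of $\{1,\dots,n\}$. For pairwise distinct $a_1,\dots,a_m\in\{1,\dots,n\}$, $(a_1,\dots,a_m)_{\rm c}$ denotes the cycle mapping $a_1\mapsto a_2\mapsto\cdots\mapsto a_m\mapsto a_1$ and fixing all other points. $\mathcal S_n^*$ is the set of permutations consisting of a single cycle of length $n$. *)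

theory Defs
  imports "HOL-Probability.Probability" "HOL-Combinatorics.Cycles"
begin

definition Sym :: "nat \<Rightarrow> (nat \<Rightarrow> nat) set" where
  "Sym n = {p. p permutes {1..n}}"

definition cyc_of :: "nat \<Rightarrow> (nat \<Rightarrow> nat) \<Rightarrow> (nat \<Rightarrow> nat)" where
  "cyc_of n p = cycle_of_list (map p [1..<n+1])"

end

theory Submission imports Defs begin

definition isrec :: "(nat\<Rightarrow>nat) \<Rightarrow> nat \<Rightarrow> bool" where
  "isrec p k \<longleftrightarrow> (\<forall>i\<in>{1..<k}. p i < p k)"
definition st :: "(nat\<Rightarrow>nat) \<Rightarrow> nat \<Rightarrow> nat" where
  "st p k = Max {i\<in>{1..k}. isrec p i}"
definition endp :: "nat \<Rightarrow> (nat\<Rightarrow>nat) \<Rightarrow> nat \<Rightarrow> bool" where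
  "endp n p k \<longleftrightarrow> (k = n \<or> isrec p (Suc k))"
definition FF :: "nat \<Rightarrow> (nat\<Rightarrow>nat) \<Rightarrow> nat \<Rightarrow> nat" where
  "FF n p k = (if k \<in> {1..n} then (if endp n p k then st p k else Suc k) else k)"
definition fo :: "nat \<Rightarrow> (nat\<Rightarrow>nat) \<Rightarrow> nat \<Rightarrow> nat" where
  "fo n p = p \<circ> FF n p \<circ> inv p"

lemma isrec1[simp]: "isrec p 1" "isrec p (Suc 0)" by (simp_all add: isrec_def)

lemma st_props:
  assumes "k \<ge> 1"
  shows "st p k \<in> {1..k}" "isrec p (st p k)" "\<And>i. st p k < i \<Longrightarrow> i \<le> k \<Longrightarrow> \<not> isrec p i"
proof -
  let ?S = "{i\<in>{1..k}. isrec p i}"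
  have fin: "finite ?S" by simp
  have "1 \<in> ?S" using assms by simp
  hence ne: "?S \<noteq> {}" by blast
  have sS: "st p k \<in> ?S" unfolding st_def using Max_in[OF fin ne] .
  then show "st p k \<in> {1..k}" "isrec p (st p k)" by auto
  fix i assume a: "st p k < i" "i \<le> k"
  show "\<not> isrec p i"
  proof
    assume "isrec p i"
    hence "i \<in> ?S" using a sS by auto
    hence "i \<le> st p k" unfolding st_def using Max_ge[OF fin] by blast
    thus False using a by simp
  qed
qed

lemma st_eq:
  assumes "1 \<le> a" "a \<le> i" "isrec p a" "\<And>l. a < l \<Longrightarrow> l \<le> i \<Longrightarrow> \<not> isrec p l"
  shows "st p i = a"
proof -
  have "st p i \<in> {1..i}" "isrec p (st p i)" using st_props[of i p] assms by auto
  moreover have "\<not> st p i < a" using st_props(3)[of i p a] assms by auto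
  ultimately show ?thesis using assms(4)[of "st p i"] by (cases "st p i = a") auto
qed

lemma FF_in: "k \<in> {1..n} \<Longrightarrow> FF n p k \<in> {1..n}"
  using st_props[of k p] by (auto simp: FF_def endp_def)

lemma FF_inj: "inj_on (FF n p) {1..n}"
proof (rule inj_onI)
  fix k k' assume k: "k \<in> {1..n}" and k': "k' \<in> {1..n}" and eq: "FF n p k = FF n p k'"
  show "k = k'"
  proof (cases "endp n p k")
    case True note Tk = this
    show ?thesis
    proof (cases "endp n p k'")
      case True
      have e: "st p k = st p k'" using eq k k' Tk True by (simp add: FF_def)
      show ?thesis
      proof (rule ccontr)
        assume "k \<noteq> k'"
        then consider "k < k'" | "k' < k" by linarith
        then show False
        proof cases
          case 1
          hence "isrec p (Suc k)" using Tk k' by (auto simp: endp_def)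
          moreover have "st p k' < Suc k" using e st_props(1)[of k p] k by auto
          ultimately show False using st_props(3)[of k' p "Suc k"] 1 k' by auto
        next
          case 2
          hence "isrec p (Suc k')" using True k by (auto simp: endp_def)
          moreover have "st p k < Suc k'" using e st_props(1)[of k' p] k' by auto
          ultimately show False using st_props(3)[of k p "Suc k'"] 2 k by auto
        qed
      qed
    next
      case False
      have "st p k = Suc k'" using eq k k' Tk False by (simp add: FF_def)
      moreover have "\<not> isrec p (Suc k')" using False by (simp add: endp_def)
      ultimately show ?thesis using st_props(2)[of k p] k by auto
    qed
  next
    case False note Fk = this
    show ?thesis
    proof (cases "endp n p k'")
      case True
      have "st p k' = Suc k" using eq k k' Fk True by (simp add: FF_def)
      moreover have "\<not> isrec p (Suc k)" using Fk by (simp add: endp_def)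
      ultimately show ?thesis using st_props(2)[of k' p] k' by auto
    next
      case False
      then show ?thesis using eq k k' Fk by (simp add: FF_def)
    qed
  qed
qed

lemma FF_permutes: "FF n p permutes {1..n}"
proof (rule bij_imp_permutes)
  have "FF n p ` {1..n} = {1..n}"
    by (rule endo_inj_surj) (use FF_in FF_inj in auto)
  then show "bij_betw (FF n p) {1..n} {1..n}" using FF_inj by (simp add: bij_betw_def)
  show "\<And>x. x \<notin> {1..n} \<Longrightarrow> FF n p x = x" unfolding FF_def by presburger
qed

lemma fo_Sym: "p \<in> Sym n \<Longrightarrow> fo n p \<in> Sym n"
proof -
  assume "p \<in> Sym n"
  hence p: "p permutes {1..n}" by (simp add: Sym_def)
  have "p \<circ> FF n p \<circ> inv p permutes {1..n}"
    by (intro permutes_compose permutes_inv p FF_permutes)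
  thus ?thesis by (simp add: Sym_def fo_def)
qed

lemma fo_apply: "p \<in> Sym n \<Longrightarrow> fo n p (p x) = p (FF n p x)"
  unfolding Sym_def fo_def using permutes_inverses(2) by fastforce

lemma fo_pow: "p \<in> Sym n \<Longrightarrow> (fo n p ^^ j) (p x) = p ((FF n p ^^ j) x)"
  by (induction j) (auto simp: fo_apply)


lemma reach_st:
  assumes "m \<in> {1..n}"
  shows "\<exists>j. (FF n q ^^ j) m = st q m"
  using assms
proof (induction "n - m" arbitrary: m)
  case 0
  hence "m = n" by auto
  hence "FF n q m = st q m" using 0 by (simp add: FF_def endp_def)
  hence "(FF n q ^^ 1) m = st q m" by simp
  thus ?case by blast
next
  case (Suc d)
  show ?case
  proof (cases "endp n q m")
    case True
    hence "FF n q m = st q m" using Suc by (simp add: FF_def)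
    hence "(FF n q ^^ 1) m = st q m" by simp
    thus ?thesis by blast
  next
    case False
    hence F: "FF n q m = Suc m" "m < n" "\<not> isrec q (Suc m)" using Suc by (auto simp: FF_def endp_def)
    have "st q (Suc m) = st q m"
    proof (rule st_eq)
      show "1 \<le> st q m" "st q m \<le> Suc m" "isrec q (st q m)" using st_props[of m q] Suc.prems by auto
      fix l assume "st q m < l" "l \<le> Suc m"
      thus "\<not> isrec q l" using st_props(3)[of m q l] Suc.prems F(3) by (cases "l = Suc m") auto
    qed
    moreover have "\<exists>j. (FF n q ^^ j) (Suc m) = st q (Suc m)"
      using Suc.hyps(1)[of "Suc m"] Suc.hyps(2) Suc.prems F(2) by auto
    then obtain j where "(FF n q ^^ j) (Suc m) = st q (Suc m)" by blast
    ultimately have "(FF n q ^^ Suc j) m = st q m" by (simp only: funpow_Suc_right o_apply F(1))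
    thus ?thesis by blast
  qed
qed

lemma seg_bound:
  assumes a: "a \<in> {1..n}" and r: "isrec p a"
  shows "p ((FF n p ^^ j) a) \<le> p a"
proof -
  define S where "S = {i. a \<le> i \<and> i \<le> n \<and> (\<forall>l. a < l \<and> l \<le> i \<longrightarrow> \<not> isrec p l)}"
  have cl: "(FF n p ^^ j) a \<in> S" for j
  proof (induction j)
    case 0 thus ?case using a by (auto simp: S_def)
  next
    case (Suc j)
    define i where "i = (FF n p ^^ j) a"
    have iS: "i \<in> S" using Suc i_def by simp
    have "FF n p i \<in> S"
    proof (cases "endp n p i")
      case True
      have "st p i = a" by (rule st_eq) (use a r iS in \<open>auto simp: S_def\<close>)
      thus ?thesis using True iS a by (auto simp: FF_def S_def)
    next
      case False
      hence "i < n" "\<not> isrec p (Suc i)" using iS by (auto simp: endp_def S_def)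
      thus ?thesis using False iS a
        by (auto simp: FF_def S_def) (metis le_Suc_eq)
    qed
    thus ?case using i_def by simp
  qed
  have bd: "i \<in> S \<Longrightarrow> p i \<le> p a" for i
  proof (induction i rule: less_induct)
    case (less i)
    show ?case
    proof (cases "i = a")
      case False
      hence "a < i" using less.prems by (auto simp: S_def)
      hence "\<not> isrec p i" using less.prems by (auto simp: S_def)
      then obtain i' where i': "i' \<in> {1..<i}" "p i \<le> p i'" unfolding isrec_def by auto
      show ?thesis
      proof (cases "a \<le> i'")
        case True
        hence "i' \<in> S" using less.prems i' by (auto simp: S_def)
        thus ?thesis using less.IH[of i'] i' by auto
      next
        case False
        hence "p i' < p a" using r i' unfolding isrec_def by auto
        thus ?thesis using i' by simp
      qed
    qed simp
  qed
  show ?thesis using bd cl by blast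
qed

lemma Sym_inj: "p \<in> Sym n \<Longrightarrow> inj p"
  unfolding Sym_def using permutes_inj by blast

lemma nonrec_step:
  assumes p: "p \<in> Sym n" and q: "q \<in> Sym n" and eq: "fo n p = fo n q"
    and h: "\<forall>i\<in>{1..k}. p i = q i" and k: "Suc k \<le> n" and nr: "\<not> isrec p (Suc k)"
  shows "p (Suc k) = q (Suc k)"
proof -
  have k1: "k \<ge> 1" using nr by (cases k) auto
  have "FF n p k = Suc k" using nr k k1 by (auto simp: FF_def endp_def)
  hence e1: "fo n p (p k) = p (Suc k)" using fo_apply[OF p] by simp
  have e2: "fo n q (q k) = q (FF n q k)" using fo_apply[OF q] by simp
  have "q k = p k" using h k1 by auto
  hence pq: "p (Suc k) = q (FF n q k)" using e1 e2 eq by simp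
  show ?thesis
  proof (cases "endp n q k")
    case False
    thus ?thesis using pq k k1 by (auto simp: FF_def)
  next
    case True
    hence "FF n q k = st q k" using k k1 by (simp add: FF_def)
    moreover have "st q k \<in> {1..k}" using st_props[of k q] k1 by simp
    ultimately have "p (Suc k) = p (st q k)" "st q k \<in> {1..k}" using pq h by auto
    hence False using Sym_inj[OF p] by (auto dest: injD)
    thus ?thesis ..
  qed
qed

lemma rec_step:
  assumes p: "p \<in> Sym n" and q: "q \<in> Sym n" and eq: "fo n p = fo n q"
    and h: "\<forall>i\<in>{1..k}. p i = q i" and k: "Suc k \<le> n"
    and rp: "isrec p (Suc k)" and rq: "isrec q (Suc k)" and lt: "p (Suc k) < q (Suc k)"
  shows False
proof -
  define a where "a = Suc k"
  have a: "a \<in> {1..n}" using k a_def by simp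
  have qp: "q permutes {1..n}" and pp: "p permutes {1..n}" using p q by (auto simp: Sym_def)
  define v where "v = p a"
  have v: "v \<in> {1..n}" using permutes_in_image[OF pp] a v_def by simp
  define m where "m = inv q v"
  have qm: "q m = v" using permutes_inverses(1)[OF qp] m_def by simp
  have m: "m \<in> {1..n}" using permutes_in_image[OF permutes_inv[OF qp]] v m_def by simp
  have "m > a"
  proof (rule ccontr)
    assume "\<not> a < m"
    hence "m \<le> a" by simp
    moreover have "m \<noteq> a" using qm v_def lt a_def by auto
    ultimately have "m \<in> {1..k}" using m a_def by auto
    hence "p m = p a" using h qm v_def by auto
    thus False using Sym_inj[OF p] \<open>m \<le> a\<close> \<open>m \<noteq> a\<close> by (auto dest: injD)
  qed
  define s where "s = st q m"
  have s: "s \<in> {1..m}" "isrec q s" using st_props[of m q] m s_def by auto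
  have "a \<le> s" using st_props(3)[of m q a] m \<open>m > a\<close> rq a_def s_def by force
  moreover have "a < s \<Longrightarrow> q a < q s" using s(2) a_def unfolding isrec_def by auto
  ultimately have "q a \<le> q s" by (cases "a = s") auto
  hence gt: "q s > v" using lt v_def a_def by simp
  obtain j where j: "(FF n q ^^ j) m = s" using reach_st[OF m] s_def by auto
  have "(fo n q ^^ j) v = q s" using fo_pow[OF q, of j m] j qm by simp
  moreover have "(fo n p ^^ j) v = p ((FF n p ^^ j) a)" using fo_pow[OF p, of j a] v_def by simp
  moreover have "p ((FF n p ^^ j) a) \<le> v" using seg_bound[OF a] rp a_def v_def by simp
  ultimately show False using gt eq by simp
qed

lemma fo_inj: "inj_on (fo n) (Sym n)"
proof (rule inj_onI)
  fix p q assume p: "p \<in> Sym n" and q: "q \<in> Sym n" and eq: "fo n p = fo n q"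
  have "\<forall>i\<in>{1..k}. p i = q i" if "k \<le> n" for k
    using that
  proof (induction k)
    case 0 thus ?case by simp
  next
    case (Suc k)
    hence h: "\<forall>i\<in>{1..k}. p i = q i" by simp
    have "p (Suc k) = q (Suc k)"
    proof (cases "isrec p (Suc k) \<and> isrec q (Suc k)")
      case True
      show ?thesis
      proof (rule ccontr)
        assume "p (Suc k) \<noteq> q (Suc k)"
        then consider "p (Suc k) < q (Suc k)" | "q (Suc k) < p (Suc k)" by linarith
        thus False
        proof cases
          case 1 thus False using rec_step[OF p q eq h Suc.prems] True by blast
        next
          case 2 thus False using rec_step[OF q p eq[symmetric] _ Suc.prems] h True by auto
        qed
      qed
    next
      case False
      then consider "\<not> isrec p (Suc k)" | "\<not> isrec q (Suc k)" by blast
      thus ?thesis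
      proof cases
        case 1
        thus ?thesis using nonrec_step[OF p q eq h Suc.prems] by blast
      next
        case 2
        thus ?thesis using nonrec_step[OF q p eq[symmetric] _ Suc.prems] h by auto
      qed
    qed
    thus ?case using h by (auto simp: le_Suc_eq)
  qed
  hence "\<forall>i\<in>{1..n}. p i = q i" by blast
  moreover have "p i = q i" if "i \<notin> {1..n}" for i
    using p q that by (auto simp: Sym_def permutes_not_in)
  ultimately show "p = q" by blast
qed


lemma cyc_apply:
  assumes p: "p \<in> Sym n" and k: "k \<in> {1..n}"
  shows "cyc_of n p (p k) = p (if k < n then Suc k else 1)"
proof -
  define xs where "xs = map p [1..<n+1]"
  have inj: "inj p" using Sym_inj[OF p] .
  have d: "distinct xs" unfolding xs_def by (simp add: distinct_map inj_on_subset[OF inj])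
  have len: "length xs = n" by (simp add: xs_def)
  have "map (cycle_of_list xs ^^ 1) xs = rotate 1 xs" using cyclic_rotation[OF d] .
  hence "map (cycle_of_list xs) xs = rotate1 xs" by simp
  hence "cycle_of_list xs (xs ! (k - 1)) = rotate1 xs ! (k - 1)"
    by (metis k len nth_map atLeastAtMost_iff diff_less less_le_trans zero_less_one)
  also have "\<dots> = xs ! (k mod n)"
  proof -
    have "k - 1 < length xs" using k len by auto
    thus ?thesis using nth_rotate1[of "k - 1" xs] k len by simp
  qed
  finally have "cycle_of_list xs (xs ! (k - 1)) = xs ! (k mod n)" .
  moreover have "xs ! (k - 1) = p k"
  proof -
    have "xs ! (k - 1) = p ([1..<n+1] ! (k - 1))" unfolding xs_def by (rule nth_map) (use k in auto)
    moreover have "[1..<n+1] ! (k - 1) = k" using k by (subst nth_upt) auto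
    ultimately show ?thesis by simp
  qed
  moreover have "xs ! (k mod n) = p (if k < n then Suc k else 1)"
  proof -
    have n0: "n > 0" using k by auto
    have "xs ! (k mod n) = p ([1..<n+1] ! (k mod n))" unfolding xs_def
      by (rule nth_map) (use n0 in auto)
    moreover have "[1..<n+1] ! (k mod n) = 1 + k mod n" using n0 by (subst nth_upt) auto
    moreover have "k mod n = (if k < n then k else 0)" using k by auto
    ultimately show ?thesis by simp
  qed
  ultimately show ?thesis by (simp add: cyc_of_def xs_def)
qed

lemma cost_le:
  assumes p: "p \<in> Sym n"
  shows "card {i\<in>{1..n}. fo n p i \<noteq> cyc_of n p i} \<le> card {k\<in>{1..n}. isrec p k}"
proof -
  have pp: "p permutes {1..n}" using p by (simp add: Sym_def)
  define E where "E = {k\<in>{1..n}. endp n p k}"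
  have sub: "{i\<in>{1..n}. fo n p i \<noteq> cyc_of n p i} \<subseteq> p ` E"
  proof
    fix x assume x: "x \<in> {i\<in>{1..n}. fo n p i \<noteq> cyc_of n p i}"
    define k where "k = inv p x"
    have xk: "x = p k" using permutes_inverses(1)[OF pp] k_def by simp
    have k: "k \<in> {1..n}" using permutes_in_image[OF permutes_inv[OF pp]] x k_def by simp
    have "endp n p k"
    proof (rule ccontr)
      assume ne: "\<not> endp n p k"
      hence "FF n p k = Suc k" "k < n" using k by (auto simp: FF_def endp_def)
      hence "fo n p x = cyc_of n p x" using fo_apply[OF p] cyc_apply[OF p k] xk by simp
      thus False using x by simp
    qed
    thus "x \<in> p ` E" using xk k E_def by auto
  qed
  have "card {i\<in>{1..n}. fo n p i \<noteq> cyc_of n p i} \<le> card (p ` E)"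
    by (rule card_mono) (use sub E_def in auto)
  also have "\<dots> \<le> card E" by (rule card_image_le) (simp add: E_def)
  also have "\<dots> \<le> card {k\<in>{1..n}. isrec p k}"
  proof (rule card_inj_on_le[where f = "\<lambda>k. if k = n then 1 else Suc k"])
    show "inj_on (\<lambda>k. if k = n then 1 else Suc k) E"
    proof (rule inj_onI)
      fix a b assume a: "a \<in> E" and b: "b \<in> E"
        and e: "(if a = n then 1 else Suc a) = (if b = n then 1 else Suc b)"
      have a1: "a \<ge> 1" "b \<ge> 1" using a b by (auto simp: E_def)
      show "a = b"
      proof (cases "a = n")
        case True
        thus ?thesis using e a1 by (cases "b = n") auto
      next
        case False
        thus ?thesis using e a1 by (cases "b = n") auto
      qed
    qed
    show "(\<lambda>k. if k = n then 1 else Suc k) ` E \<subseteq> {k \<in> {1..n}. isrec p k}"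
      by (auto simp: E_def endp_def)
  qed simp
  finally show ?thesis .
qed

lemma finite_Sym: "finite (Sym n)"
  unfolding Sym_def by (rule finite_permutations) simp

lemma id_Sym: "id \<in> Sym n"
  unfolding Sym_def by (simp add: permutes_id)

lemma count_rec:
  assumes k: "k \<in> {1..n}"
  shows "k * card {p\<in>Sym n. isrec p k} \<le> card (Sym n)"
proof -
  define A where "A j = {p\<in>Sym n. \<forall>i\<in>{1..k}. i \<noteq> j \<longrightarrow> p i < p j}" for j
  have Ak: "A k = {p\<in>Sym n. isrec p k}"
    unfolding A_def isrec_def by auto
  have le: "card (A k) \<le> card (A j)" if j: "j \<in> {1..k}" for j
  proof (rule card_inj_on_le[where f = "\<lambda>p. p \<circ> Transposition.transpose j k"])
    show "inj_on (\<lambda>p. p \<circ> Transposition.transpose j k) (A k)"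
    proof (rule inj_onI)
      fix p q assume "p \<circ> Transposition.transpose j k = q \<circ> Transposition.transpose j k"
      hence "p \<circ> Transposition.transpose j k \<circ> Transposition.transpose j k = q \<circ> Transposition.transpose j k \<circ> Transposition.transpose j k" by simp
      thus "p = q" by (simp add: comp_assoc)
    qed
    show "(\<lambda>p. p \<circ> Transposition.transpose j k) ` A k \<subseteq> A j"
    proof
      fix r assume "r \<in> (\<lambda>p. p \<circ> Transposition.transpose j k) ` A k"
      then obtain p where p: "p \<in> A k" and r: "r = p \<circ> Transposition.transpose j k" by blast
      have "Transposition.transpose j k permutes {1..n}" using j k by (intro permutes_swap_id) auto
      hence "r \<in> Sym n" using p r unfolding A_def Sym_def by (auto intro: permutes_compose)
      moreover have "\<forall>i\<in>{1..k}. i \<noteq> j \<longrightarrow> r i < r j"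
        using p j unfolding A_def r by (auto simp: Transposition.transpose_def)
      ultimately show "r \<in> A j" by (simp add: A_def)
    qed
    show "finite (A j)" using finite_Sym by (simp add: A_def)
  qed
  have disj: "\<forall>i\<in>{1..k}. \<forall>j\<in>{1..k}. i \<noteq> j \<longrightarrow> A i \<inter> A j = {}"
    unfolding A_def by fastforce
  have "k * card (A k) = (\<Sum>j\<in>{1..k}. card (A k))" by simp
  also have "\<dots> \<le> (\<Sum>j\<in>{1..k}. card (A j))" by (rule sum_mono) (use le in auto)
  also have "\<dots> = card (\<Union>(A ` {1..k}))"
    by (rule card_UN_disjoint[symmetric]) (use disj finite_Sym in \<open>auto simp: A_def\<close>)
  also have "\<dots> \<le> card (Sym n)" by (rule card_mono[OF finite_Sym]) (auto simp: A_def)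
  finally show ?thesis using Ak by simp
qed

lemma harm_bound:
  assumes "n \<ge> 1"
  shows "(\<Sum>j=1..n. 1 / real j) \<le> 1 + ln (real n)"
  using assms
proof (induction n rule: dec_induct)
  case base thus ?case by simp
next
  case (step m)
  have "2 * (real (Suc m) - real m) / (real m + real (Suc m)) \<le> ln (real (Suc m)) - ln (real m)"
    by (rule ln_inverse_approx_ge) (use step in auto)
  moreover have "1 / real (Suc m) \<le> 2 * (real (Suc m) - real m) / (real m + real (Suc m))"
    using step by (simp add: field_simps)
  ultimately have "1 / real (Suc m) \<le> ln (real (Suc m)) - ln (real m)" by linarith
  moreover have "(\<Sum>j=1..Suc m. 1 / real j) = (\<Sum>j=1..m. 1 / real j) + 1 / real (Suc m)"
    by simp
  ultimately show ?case using step.IH by linarith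
qed


theorem mainTheorem6:
  fixes n :: nat
  assumes "n \<ge> 1"
  shows "\<exists>f :: (nat \<Rightarrow> nat) \<Rightarrow> (nat \<Rightarrow> nat).
           bij_betw f (Sym n) (Sym n) \<and>
           measure_pmf.expectation (pmf_of_set (Sym n))
             (\<lambda>p. real (card {i \<in> {1..n}. f p i \<noteq> cyc_of n p i}))
             \<le> (\<Sum>j=1..n. 1 / real j) \<and>
           (\<Sum>j=1..n. 1 / real j) \<le> 1 + ln (real n)"
proof (intro exI conjI)
  show "bij_betw (fo n) (Sym n) (Sym n)"
  proof -
    have "fo n ` Sym n = Sym n"
      by (rule endo_inj_surj) (use finite_Sym fo_Sym fo_inj in auto)
    thus ?thesis using fo_inj by (simp add: bij_betw_def)
  qed
  show "(\<Sum>j=1..n. 1 / real j) \<le> 1 + ln (real n)" using harm_bound[OF assms] .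
  have ne: "Sym n \<noteq> {}" using id_Sym by blast
  define N where "N = real (card (Sym n))"
  have N0: "N > 0" using ne finite_Sym by (simp add: N_def card_gt_0_iff)
  have "measure_pmf.expectation (pmf_of_set (Sym n))
             (\<lambda>p. real (card {i \<in> {1..n}. fo n p i \<noteq> cyc_of n p i}))
        = (\<Sum>p\<in>Sym n. real (card {i \<in> {1..n}. fo n p i \<noteq> cyc_of n p i})) / N"
    unfolding N_def by (rule integral_pmf_of_set[OF ne finite_Sym])
  also have "\<dots> \<le> (\<Sum>p\<in>Sym n. real (card {k\<in>{1..n}. isrec p k})) / N"
    by (intro divide_right_mono sum_mono) (use cost_le N0 in auto)
  also have "(\<Sum>p\<in>Sym n. real (card {k\<in>{1..n}. isrec p k}))
           = (\<Sum>p\<in>Sym n. \<Sum>k\<in>{1..n}. if isrec p k then 1 else 0)"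
  proof (intro sum.cong refl)
    fix p :: "nat \<Rightarrow> nat"
    have "{k\<in>{1..n}. isrec p k} = {1..n} \<inter> Collect (isrec p)" by auto
    thus "real (card {k\<in>{1..n}. isrec p k}) = (\<Sum>k\<in>{1..n}. if isrec p k then 1 else 0)"
      by (simp add: sum.If_cases)
  qed
  also have "\<dots> = (\<Sum>k\<in>{1..n}. \<Sum>p\<in>Sym n. if isrec p k then 1 else 0)"
    by (rule sum.swap)
  also have "\<dots> = (\<Sum>k\<in>{1..n}. real (card {p\<in>Sym n. isrec p k}))"
  proof (intro sum.cong refl)
    fix k :: nat
    have "Sym n \<inter> {p. isrec p k} = {p\<in>Sym n. isrec p k}" by auto
    thus "(\<Sum>p\<in>Sym n. if isrec p k then 1 else 0) = real (card {p\<in>Sym n. isrec p k})"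
      by (simp add: sum.If_cases finite_Sym)
  qed
  also have "\<dots> / N = (\<Sum>k\<in>{1..n}. real (card {p\<in>Sym n. isrec p k}) / N)"
    by (simp add: sum_divide_distrib)
  also have "\<dots> \<le> (\<Sum>k\<in>{1..n}. 1 / real k)"
  proof (rule sum_mono)
    fix k assume k: "k \<in> {1..n}"
    have "real k * real (card {p\<in>Sym n. isrec p k}) \<le> N"
      using count_rec[OF k] unfolding N_def by (metis of_nat_le_iff of_nat_mult)
    thus "real (card {p\<in>Sym n. isrec p k}) / N \<le> 1 / real k"
      using N0 k by (simp add: field_simps)
  qed
  finally show "measure_pmf.expectation (pmf_of_set (Sym n))
             (\<lambda>p. real (card {i \<in> {1..n}. fo n p i \<noteq> cyc_of n p i}))
             \<le> (\<Sum>j=1..n. 1 / real j)" .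
qed

end
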